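(* In the standing setting described in the context, let $(\phi,\beta),(\psi,\alpha)\in\mathcal{A}\times\mathcal{B}$. Then $(G,\circ_{\phi,\beta})$ and $(G,\circ_{\psi,\alpha})$ are groups (with identity $1$; the inverse of $g$ in $(G,\circ_{\phi,\beta})$ is $\phi^{\uparrow}(g)^{-1}\, g^{-1}\,\phi^{\uparrow}(g)\,\beta(g,g)$ for any lifting $\phi^\uparrow$ of $\phi$), and $(G,\circ_{\phi,\beta},\circ_{\psi,\alpha})$ is a bi-skew brace. In other words, the family of operations $(\circ_{\phi,\beta} : (\phi,\beta)\in\mathcal{A}\times\mathcal{B})$ is a brace block on $G$.
   Context: Standing setting: $(G,\cdot)$ is a group, $K$ is a subgroup of $G$ contained in the centre $Z(G)$, and $A$ is a subgroup with $K\le A\le G$ and $A/K$ abelian. Let $\mathcal{A}=\{\psi\in\operatorname{End}(G/K):\psi(G/K)\le A/K\}$; it is a ring with $(\psi+\phi)(x)=\psi(x)\phi(x)$, $(-\psi)(x)=\psi(x)^{-1}$ and $(\psi\phi)(x)=\psi(\phi(x))$. A lifting of $\psi\in\mathcal{A}$ is any set map $\psi^{\uparrow}:G\to A$ with $\psi^{\uparrow}(g)K=\psi(gK)$ for all $g\in G$ (liftings need not be unique nor homomorphisms). Let $\mathcal{B}$ be the set of maps $\alpha:G\times G\to K$ that are bilinear, i.e. $\alpha(gh,k)=\alpha(g,k)\alpha(h,k)$ and $\alpha(g,hk)=\alpha(g,h)\alpha(g,k)$ for all $g,h,k\in G$, and satisfy $\alpha(k,g)=\alpha(g,k)=1$ for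 all $k\in K$, $g\in G$. For $(\psi,\alpha)\in\mathcal{A}\times\mathcal{B}$ define $g\circ_{\psi,\alpha}h=g\cdot\psi^{\uparrow}(g)\cdot h\cdot\psi^{\uparrow}(g)^{-1}\cdot\alpha(g,h)$, where $\psi^\uparrow$ is a lifting of $\psi$ (this does not depend on the choice of lifting). A skew brace is a triple $(G,\cdot,\circ)$ where $(G,\cdot)$ and $(G,\circ)$ are groups and $g\circ(h\cdot k)=(g\circ h)\cdot g^{-1}\cdot(g\circ k)$ for all $g,h,k$ ($g^{-1}$ the inverse for $\cdot$). A bi-skew brace is a triple $(G,\cdot,\circ)$ such that both $(G,\cdot,\circ)$ and $(G,\circ,\cdot)$ are skew braces. A brace block on a set $G$ is a family $\mathcal{F}$ of group operations on $G$ such that $(G,\circ,\diamond)$ is a bi-skew brace for all $\circ,\diamond\in\mathcal{F}$. *)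

theory Defs
  imports "HOL-Algebra.Algebra"
begin

definition central_subgroup :: "('a, 'b) monoid_scheme \<Rightarrow> 'a set \<Rightarrow> bool" where
  "central_subgroup G K \<longleftrightarrow> subgroup K G \<and>
     (\<forall>k\<in>K. \<forall>g\<in>carrier G. k \<otimes>\<^bsub>G\<^esub> g = g \<otimes>\<^bsub>G\<^esub> k)"

definition endA :: "('a, 'b) monoid_scheme \<Rightarrow> 'a set \<Rightarrow> 'a set \<Rightarrow> ('a set \<Rightarrow> 'a set) set" where
  "endA G K A = {\<psi>. \<psi> \<in> hom (G Mod K) (G Mod K) \<and>
      \<psi> ` carrier (G Mod K) \<subseteq> (\<lambda>a. K #>\<^bsub>G\<^esub> a) ` A}"

definition bilinB :: "('a, 'b) monoid_scheme \<Rightarrow> 'a set \<Rightarrow> ('a \<Rightarrow> 'a \<Rightarrow> 'a) set" where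
  "bilinB G K = {\<alpha>.
     (\<forall>g\<in>carrier G. \<forall>h\<in>carrier G. \<alpha> g h \<in> K) \<and>
     (\<forall>g\<in>carrier G. \<forall>h\<in>carrier G. \<forall>k\<in>carrier G.
        \<alpha> (g \<otimes>\<^bsub>G\<^esub> h) k = \<alpha> g k \<otimes>\<^bsub>G\<^esub> \<alpha> h k \<and>
        \<alpha> g (h \<otimes>\<^bsub>G\<^esub> k) = \<alpha> g h \<otimes>\<^bsub>G\<^esub> \<alpha> g k) \<and>
     (\<forall>k\<in>K. \<forall>g\<in>carrier G. \<alpha> k g = \<one>\<^bsub>G\<^esub> \<and> \<alpha> g k = \<one>\<^bsub>G\<^esub>)}"

definition is_lifting :: "('a, 'b) monoid_scheme \<Rightarrow> 'a set \<Rightarrow> 'a set \<Rightarrow> ('a set \<Rightarrow> 'a set) \<Rightarrow> ('a \<Rightarrow> 'a) \<Rightarrow> bool" where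
  "is_lifting G K A \<psi> f \<longleftrightarrow>
     (\<forall>g\<in>carrier G. f g \<in> A \<and> K #>\<^bsub>G\<^esub> f g = \<psi> (K #>\<^bsub>G\<^esub> g))"

text \<open>A chosen lifting (the operation does not depend on the choice).\<close>
definition lifting :: "('a, 'b) monoid_scheme \<Rightarrow> 'a set \<Rightarrow> 'a set \<Rightarrow> ('a set \<Rightarrow> 'a set) \<Rightarrow> 'a \<Rightarrow> 'a" where
  "lifting G K A \<psi> = (SOME f. is_lifting G K A \<psi> f)"

definition circ_op :: "('a, 'b) monoid_scheme \<Rightarrow> 'a set \<Rightarrow> 'a set \<Rightarrow> ('a set \<Rightarrow> 'a set) \<Rightarrow> ('a \<Rightarrow> 'a \<Rightarrow> 'a) \<Rightarrow> 'a \<Rightarrow> 'a \<Rightarrow> 'a" where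
  "circ_op G K A \<psi> \<alpha> g h =
     g \<otimes>\<^bsub>G\<^esub> lifting G K A \<psi> g \<otimes>\<^bsub>G\<^esub> h \<otimes>\<^bsub>G\<^esub> inv\<^bsub>G\<^esub> (lifting G K A \<psi> g) \<otimes>\<^bsub>G\<^esub> \<alpha> g h"

definition circ_struct :: "('a, 'b) monoid_scheme \<Rightarrow> 'a set \<Rightarrow> 'a set \<Rightarrow> ('a set \<Rightarrow> 'a set) \<Rightarrow> ('a \<Rightarrow> 'a \<Rightarrow> 'a) \<Rightarrow> 'a monoid" where
  "circ_struct G K A \<psi> \<alpha> =
     \<lparr>carrier = carrier G, monoid.mult = circ_op G K A \<psi> \<alpha>, monoid.one = \<one>\<^bsub>G\<^esub>\<rparr>"

definition skew_brace :: "'a monoid \<Rightarrow> 'a monoid \<Rightarrow> bool" where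
  "skew_brace D C \<longleftrightarrow> group D \<and> group C \<and> carrier C = carrier D \<and>
     (\<forall>g\<in>carrier D. \<forall>h\<in>carrier D. \<forall>k\<in>carrier D.
        g \<otimes>\<^bsub>C\<^esub> (h \<otimes>\<^bsub>D\<^esub> k) =
        (g \<otimes>\<^bsub>C\<^esub> h) \<otimes>\<^bsub>D\<^esub> inv\<^bsub>D\<^esub> g \<otimes>\<^bsub>D\<^esub> (g \<otimes>\<^bsub>C\<^esub> k))"

definition bi_skew_brace :: "'a monoid \<Rightarrow> 'a monoid \<Rightarrow> bool" where
  "bi_skew_brace D C \<longleftrightarrow> skew_brace D C \<and> skew_brace C D"

definition brace_block :: "'a set \<Rightarrow> 'a monoid set \<Rightarrow> bool" where
  "brace_block S F \<longleftrightarrow> (\<forall>C\<in>F. carrier C = S \<and> group C) \<and>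
     (\<forall>C\<in>F. \<forall>D\<in>F. bi_skew_brace C D)"

end

theory Submission
  imports Defs
begin

locale bbs = group G for G :: "('a,'b) monoid_scheme" (structure) +
  fixes K A :: "'a set"
  assumes cs: "central_subgroup G K" and sA: "subgroup A G" and KA: "K \<subseteq> A"
    and cg: "comm_group (G\<lparr>carrier := A\<rparr> Mod K)"
begin

lemma sK: "subgroup K G" using cs unfolding central_subgroup_def by blast
lemma KG: "K \<subseteq> carrier G" using sK subgroup.subset by blast
lemma Kc[simp]: "k \<in> K \<Longrightarrow> k \<in> carrier G" using KG by blast
lemma Ac[simp]: "a \<in> A \<Longrightarrow> a \<in> carrier G" using sA subgroup.subset by blast
lemma cm: "k \<in> K \<Longrightarrow> x \<in> carrier G \<Longrightarrow> k \<otimes> x = x \<otimes> k"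
  using cs unfolding central_subgroup_def by blast
lemma cml: "k \<in> K \<Longrightarrow> x \<in> carrier G \<Longrightarrow> y \<in> carrier G \<Longrightarrow> k \<otimes> (x \<otimes> y) = x \<otimes> (k \<otimes> y)"
  by (metis cm Kc m_assoc)
lemma Kmult[simp]: "k \<in> K \<Longrightarrow> l \<in> K \<Longrightarrow> k \<otimes> l \<in> K"
  by (rule subgroup.m_closed[OF sK])
lemma Kinv[simp]: "k \<in> K \<Longrightarrow> inv k \<in> K"
  by (rule subgroup.m_inv_closed[OF sK])
lemma Kone[simp]: "\<one> \<in> K"
  by (rule subgroup.one_closed[OF sK])
lemma nK: "K \<lhd> G"
  unfolding normal_inv_iff
proof (intro conjI sK ballI)
  fix x h assume "x \<in> carrier G" "h \<in> K"
  then have e: "h \<otimes> x = x \<otimes> h" using cm[of h x] by blast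
  have "x \<otimes> h \<otimes> inv x = h \<otimes> x \<otimes> inv x" unfolding e ..
  also have "\<dots> = h" using \<open>x \<in> carrier G\<close> \<open>h \<in> K\<close> by (simp add: m_assoc)
  finally show "x \<otimes> h \<otimes> inv x \<in> K" using \<open>h \<in> K\<close> by (simp only:)
qed

lemma canc1[simp]: "x \<in> carrier G \<Longrightarrow> y \<in> carrier G \<Longrightarrow> x \<otimes> (inv x \<otimes> y) = y"
  by (simp add: m_assoc[symmetric])
lemma canc2[simp]: "x \<in> carrier G \<Longrightarrow> y \<in> carrier G \<Longrightarrow> inv x \<otimes> (x \<otimes> y) = y"
  by (simp add: m_assoc[symmetric])

definition mk where "mk x y \<longleftrightarrow> x \<in> carrier G \<and> y \<in> carrier G \<and> (\<exists>k\<in>K. x = y \<otimes> k)"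

lemma mk_refl: "x \<in> carrier G \<Longrightarrow> mk x x"
  unfolding mk_def by (metis Kone r_one)
lemma mk_sym: "mk x y \<Longrightarrow> mk y x"
proof -
  assume "mk x y"
  then obtain k where "k \<in> K" "x = y \<otimes> k" "y \<in> carrier G" unfolding mk_def by blast
  then show ?thesis unfolding mk_def by (auto simp: m_assoc intro!: bexI[of _ "inv k"])
qed
lemma mk_trans: "mk x y \<Longrightarrow> mk y z \<Longrightarrow> mk x z"
  unfolding mk_def by (auto simp: m_assoc)
lemma mk_mult: "mk x x' \<Longrightarrow> mk y y' \<Longrightarrow> mk (x \<otimes> y) (x' \<otimes> y')"
proof -
  assume "mk x x'" "mk y y'"
  then obtain k l where kl: "k \<in> K" "l \<in> K" "x = x' \<otimes> k" "y = y' \<otimes> l"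
    and c: "x' \<in> carrier G" "y' \<in> carrier G" unfolding mk_def by blast
  have "x' \<otimes> k \<otimes> (y' \<otimes> l) = x' \<otimes> y' \<otimes> (k \<otimes> l)"
    using kl c by (simp add: m_assoc cml[of k y' l])
  then show ?thesis using kl c unfolding mk_def by auto
qed
lemma mk_inv: "mk x x' \<Longrightarrow> mk (inv x) (inv x')"
proof -
  assume "mk x x'"
  then obtain k where kl: "k \<in> K" "x = x' \<otimes> k" and c: "x' \<in> carrier G" unfolding mk_def by blast
  have "inv (x' \<otimes> k) = inv x' \<otimes> inv k" using kl c
    by (simp add: inv_mult_group cm[of "inv k" "inv x'"])
  then show ?thesis using kl c unfolding mk_def by (auto intro!: bexI[of _ "inv k"])
qed
lemma mk_K: "x \<in> carrier G \<Longrightarrow> k \<in> K \<Longrightarrow> mk (x \<otimes> k) x"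
  unfolding mk_def by auto
lemma mk_Kr: "x \<in> carrier G \<Longrightarrow> k \<in> K \<Longrightarrow> mk x (x \<otimes> k)"
  by (simp add: mk_K mk_sym)
lemma mk_coset: "x \<in> carrier G \<Longrightarrow> y \<in> carrier G \<Longrightarrow> K #> x = K #> y \<Longrightarrow> mk x y"
proof -
  assume a: "x \<in> carrier G" "y \<in> carrier G" "K #> x = K #> y"
  then have "x \<in> K #> y" using rcos_self sK by metis
  then obtain k where "k \<in> K" "x = k \<otimes> y" unfolding r_coset_def by blast
  then show ?thesis using a cm[of k y] unfolding mk_def by auto
qed
lemma mk_conj: "mk a b \<Longrightarrow> z \<in> carrier G \<Longrightarrow> a \<otimes> z \<otimes> inv a = b \<otimes> z \<otimes> inv b"
proof -
  assume "mk a b" "z \<in> carrier G"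
  then obtain k where kl: "k \<in> K" "a = b \<otimes> k" and c: "b \<in> carrier G" "z \<in> carrier G" unfolding mk_def by blast
  have "b \<otimes> k \<otimes> z \<otimes> inv (b \<otimes> k) = b \<otimes> (k \<otimes> (z \<otimes> (inv k \<otimes> inv b)))"
    using kl c by (simp add: m_assoc inv_mult_group cm)
  also have "\<dots> = b \<otimes> (z \<otimes> (k \<otimes> (inv k \<otimes> inv b)))" using kl c by (simp add: cml[of k z])
  also have "\<dots> = b \<otimes> z \<otimes> inv b" using kl c by (simp add: m_assoc)
  finally show ?thesis unfolding kl(2) .
qed

lemma Acomm: "a \<in> A \<Longrightarrow> b \<in> A \<Longrightarrow> mk (a \<otimes> b) (b \<otimes> a)"
proof -
  assume ab: "a \<in> A" "b \<in> A"
  interpret C: comm_group "G\<lparr>carrier := A\<rparr> Mod K" by (rule cg)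
  have rc: "r_coset (G\<lparr>carrier := A\<rparr>) K x = K #> x" for x
    by (simp add: r_coset_def)
  have "K #> a \<in> carrier (G\<lparr>carrier := A\<rparr> Mod K)" "K #> b \<in> carrier (G\<lparr>carrier := A\<rparr> Mod K)"
    using ab by (auto simp: FactGroup_def RCOSETS_def rc)
  then have "(K #> a) \<otimes>\<^bsub>G\<lparr>carrier := A\<rparr> Mod K\<^esub> (K #> b) = (K #> b) \<otimes>\<^bsub>G\<lparr>carrier := A\<rparr> Mod K\<^esub> (K #> a)"
    by (intro C.m_comm)
  moreover have "set_mult (G\<lparr>carrier := A\<rparr>) U V = U <#> V" for U V
    unfolding set_mult_def by simp
  ultimately have "(K #> a) <#> (K #> b) = (K #> b) <#> (K #> a)"
    by simp
  then have "K #> (a \<otimes> b) = K #> (b \<otimes> a)"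
    using ab nK by (simp add: normal.rcos_sum)
  then show ?thesis using ab by (simp add: mk_coset)
qed


lemma kcomm: "k \<in> K \<Longrightarrow> l \<in> K \<Longrightarrow> k \<otimes> l = l \<otimes> k"
  by (simp add: cm)
lemma klcomm: "k \<in> K \<Longrightarrow> l \<in> K \<Longrightarrow> m \<in> carrier G \<Longrightarrow> k \<otimes> (l \<otimes> m) = l \<otimes> (k \<otimes> m)"
  by (metis Kc cm m_assoc)
lemma mid: "k \<in> K \<Longrightarrow> p \<in> carrier G \<Longrightarrow> q \<in> carrier G \<Longrightarrow> p \<otimes> k \<otimes> q = p \<otimes> q \<otimes> k"
  by (metis Kc cm m_assoc)

definition cj where "cj a x = a \<otimes> x \<otimes> inv a"

lemma cj_c[simp]: "a \<in> carrier G \<Longrightarrow> x \<in> carrier G \<Longrightarrow> cj a x \<in> carrier G"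
  unfolding cj_def by simp
lemma cj_mult: "a \<in> carrier G \<Longrightarrow> x \<in> carrier G \<Longrightarrow> y \<in> carrier G \<Longrightarrow> cj a (x \<otimes> y) = cj a x \<otimes> cj a y"
  unfolding cj_def by (simp add: m_assoc)
lemma cj_K: "a \<in> carrier G \<Longrightarrow> k \<in> K \<Longrightarrow> cj a k = k"
  unfolding cj_def using cm[of k a, symmetric] by (simp add: m_assoc)
lemma cj_cj: "a \<in> carrier G \<Longrightarrow> b \<in> carrier G \<Longrightarrow> x \<in> carrier G \<Longrightarrow> cj a (cj b x) = cj (a \<otimes> b) x"
  unfolding cj_def by (simp add: m_assoc inv_mult_group)
lemma cj_one: "x \<in> carrier G \<Longrightarrow> cj \<one> x = x"
  unfolding cj_def by simp
lemma cj_inv: "a \<in> carrier G \<Longrightarrow> x \<in> carrier G \<Longrightarrow> cj a (inv x) = inv (cj a x)"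
  unfolding cj_def by (simp add: m_assoc inv_mult_group)
lemma cj_mk: "mk a b \<Longrightarrow> x \<in> carrier G \<Longrightarrow> cj a x = cj b x"
  unfolding cj_def by (rule mk_conj)
lemma mk_c: "mk a b \<Longrightarrow> a \<in> carrier G" "mk a b \<Longrightarrow> b \<in> carrier G"
  unfolding mk_def by auto

lemma sh1: assumes "x \<in> carrier G" "P \<in> carrier G" "Q \<in> carrier G" "k1 \<in> K" "k2 \<in> K" "k3 \<in> K"
  shows "x \<otimes> P \<otimes> k1 \<otimes> Q \<otimes> (k2 \<otimes> k3) = x \<otimes> (P \<otimes> Q \<otimes> k3) \<otimes> (k1 \<otimes> k2)"
proof -
  have "x \<otimes> P \<otimes> k1 \<otimes> Q \<otimes> (k2 \<otimes> k3) = x \<otimes> P \<otimes> Q \<otimes> k1 \<otimes> (k2 \<otimes> k3)"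
    using assms mid[of k1 "x \<otimes> P" Q] by simp
  also have "\<dots> = x \<otimes> P \<otimes> Q \<otimes> (k1 \<otimes> (k2 \<otimes> k3))" using assms by (simp add: m_assoc)
  also have "k1 \<otimes> (k2 \<otimes> k3) = k3 \<otimes> (k1 \<otimes> k2)" using assms by (simp add: kcomm klcomm)
  also have "x \<otimes> P \<otimes> Q \<otimes> (k3 \<otimes> (k1 \<otimes> k2)) = x \<otimes> (P \<otimes> Q \<otimes> k3) \<otimes> (k1 \<otimes> k2)"
    using assms by (simp add: m_assoc)
  finally show ?thesis .
qed

lemma mk_cos: "mk x y \<Longrightarrow> K #> x = K #> y"
proof -
  assume "mk x y"
  then obtain k where k: "k \<in> K" "x = y \<otimes> k" "y \<in> carrier G" unfolding mk_def by blast
  then have "x = k \<otimes> y" using cm[of k y] by simp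
  then have "K #> x = (K #> k) #> y" using k KG by (simp add: coset_mult_assoc)
  also have "K #> k = K" using k by (simp add: sK subgroup.rcos_const)
  finally show ?thesis .
qed

lemma lift_ex: assumes "\<chi> \<in> endA G K A" shows "is_lifting G K A \<chi> (lifting G K A \<chi>)"
proof -
  have "\<forall>g\<in>carrier G. \<exists>a. a \<in> A \<and> K #> a = \<chi> (K #> g)"
  proof
    fix g assume g: "g \<in> carrier G"
    then have "K #> g \<in> carrier (G Mod K)" by (simp add: carrier_FactGroup)
    then have "\<chi> (K #> g) \<in> (\<lambda>a. K #> a) ` A" using assms unfolding endA_def by blast
    then obtain a where "a \<in> A" "\<chi> (K #> g) = K #> a" by blast
    then show "\<exists>a. a \<in> A \<and> K #> a = \<chi> (K #> g)" by blast
  qed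
  then obtain h where "\<forall>g\<in>carrier G. h g \<in> A \<and> K #> h g = \<chi> (K #> g)"
    by (rule bchoice[elim_format]) blast
  then have "is_lifting G K A \<chi> h"
    unfolding is_lifting_def by blast
  then show ?thesis unfolding lifting_def by (rule someI[of "is_lifting G K A \<chi>"])
qed

end

locale lif = bbs +
  fixes \<chi> f \<gamma>
  assumes chi: "\<chi> \<in> endA G K A" and fl: "is_lifting G K A \<chi> f" and gm: "\<gamma> \<in> bilinB G K"
begin

lemma fA[simp]: "g \<in> carrier G \<Longrightarrow> f g \<in> A" using fl unfolding is_lifting_def by blast
lemma fc[simp]: "g \<in> carrier G \<Longrightarrow> f g \<in> carrier G" by simp
lemma fcos: "g \<in> carrier G \<Longrightarrow> K #> f g = \<chi> (K #> g)" using fl unfolding is_lifting_def by blast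
lemma hom: "\<chi> \<in> hom (G Mod K) (G Mod K)" using chi unfolding endA_def by blast

lemma lift_mult: "x \<in> carrier G \<Longrightarrow> y \<in> carrier G \<Longrightarrow> mk (f (x \<otimes> y)) (f x \<otimes> f y)"
proof -
  assume xy: "x \<in> carrier G" "y \<in> carrier G"
  have c: "K #> x \<in> carrier (G Mod K)" "K #> y \<in> carrier (G Mod K)"
    using xy by (simp_all add: carrier_FactGroup)
  have "K #> f (x \<otimes> y) = \<chi> (K #> (x \<otimes> y))" using xy by (simp add: fcos)
  also have "\<dots> = \<chi> ((K #> x) <#> (K #> y))" using xy nK by (simp add: normal.rcos_sum)
  also have "\<dots> = \<chi> (K #> x) <#> \<chi> (K #> y)"
    using hom_mult[OF hom c] by simp
  also have "\<dots> = (K #> f x) <#> (K #> f y)" using xy by (simp add: fcos)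
  also have "\<dots> = K #> (f x \<otimes> f y)" using xy nK by (simp add: normal.rcos_sum)
  finally show ?thesis using xy by (intro mk_coset) auto
qed

lemma lift_one: "mk (f \<one>) \<one>"
proof -
  have g: "group (G Mod K)" by (rule normal.factorgroup_is_group[OF nK])
  have "\<chi> K = K" using hom_one[OF hom g g] by simp
  moreover have "K #> \<one> = K" by (simp add: sK subgroup.rcos_const)
  ultimately have "K #> f \<one> = K #> \<one>" using fcos[of \<one>] by simp
  then show ?thesis by (intro mk_coset) auto
qed

lemma lift_inv: "x \<in> carrier G \<Longrightarrow> mk (f (inv x)) (inv (f x))"
proof -
  assume x: "x \<in> carrier G"
  have "mk (f x \<otimes> f (inv x)) \<one>"
    using lift_mult[of x "inv x"] x lift_one by (auto intro: mk_trans mk_sym)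
  then have "mk (inv (f x) \<otimes> (f x \<otimes> f (inv x))) (inv (f x) \<otimes> \<one>)"
    using x by (intro mk_mult mk_refl) auto
  then show ?thesis using x by simp
qed

lemma lift_resp: "mk x y \<Longrightarrow> mk (f x) (f y)"
proof -
  assume m: "mk x y"
  then have "K #> f x = K #> f y" using fcos[of x] fcos[of y] mk_cos[OF m] mk_c[OF m] by simp
  then show ?thesis using mk_c[OF m] by (intro mk_coset) auto
qed

lemma lift_K: "x \<in> carrier G \<Longrightarrow> k \<in> K \<Longrightarrow> mk (f (x \<otimes> k)) (f x)"
  by (intro lift_resp mk_K)

lemma lift_cj: "a \<in> carrier G \<Longrightarrow> x \<in> carrier G \<Longrightarrow> mk (f (cj a x)) (f x)"
proof -
  assume ax: "a \<in> carrier G" "x \<in> carrier G"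
  have "mk (f (cj a x)) (f (a \<otimes> x) \<otimes> f (inv a))"
    unfolding cj_def using ax by (intro lift_mult) auto
  moreover have "mk (f (a \<otimes> x) \<otimes> f (inv a)) (f a \<otimes> f x \<otimes> inv (f a))"
    using ax by (intro mk_mult lift_mult lift_inv) auto
  moreover have "mk (f a \<otimes> f x \<otimes> inv (f a)) (f x \<otimes> f a \<otimes> inv (f a))"
    using ax by (intro mk_mult Acomm mk_refl) auto
  moreover have "f x \<otimes> f a \<otimes> inv (f a) = f x" using ax by (simp add: m_assoc)
  ultimately show ?thesis by (metis mk_trans)
qed


lemma gK[simp]: "x \<in> carrier G \<Longrightarrow> y \<in> carrier G \<Longrightarrow> \<gamma> x y \<in> K"
  using gm unfolding bilinB_def by blast
lemma g1: "x \<in> carrier G \<Longrightarrow> y \<in> carrier G \<Longrightarrow> z \<in> carrier G \<Longrightarrow> \<gamma> (x \<otimes> y) z = \<gamma> x z \<otimes> \<gamma> y z"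
  using gm unfolding bilinB_def by blast
lemma g2: "x \<in> carrier G \<Longrightarrow> y \<in> carrier G \<Longrightarrow> z \<in> carrier G \<Longrightarrow> \<gamma> x (y \<otimes> z) = \<gamma> x y \<otimes> \<gamma> x z"
  using gm unfolding bilinB_def by blast
lemma gk1: "k \<in> K \<Longrightarrow> y \<in> carrier G \<Longrightarrow> \<gamma> k y = \<one>"
  using gm unfolding bilinB_def by blast
lemma gk2: "k \<in> K \<Longrightarrow> y \<in> carrier G \<Longrightarrow> \<gamma> y k = \<one>"
  using gm unfolding bilinB_def by blast
lemma ginv1: "x \<in> carrier G \<Longrightarrow> y \<in> carrier G \<Longrightarrow> \<gamma> (inv x) y = inv (\<gamma> x y)"
proof -
  assume a: "x \<in> carrier G" "y \<in> carrier G"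
  have "\<gamma> x y \<otimes> \<gamma> (inv x) y = \<gamma> (x \<otimes> inv x) y" using a by (intro g1[symmetric]) auto
  also have "\<dots> = \<gamma> \<one> y" using a by simp
  also have "\<dots> = \<one>" using a by (intro gk1) auto
  finally have "\<gamma> x y \<otimes> \<gamma> (inv x) y = \<one>" .
  then have "\<gamma> (inv x) y \<otimes> \<gamma> x y = \<one>" by (rule inv_comm) (use a in simp_all)
  then have "inv (\<gamma> x y) = \<gamma> (inv x) y" by (rule inv_equality) (use a in simp_all)
  then show ?thesis by (rule sym)
qed
lemma ginv2: "x \<in> carrier G \<Longrightarrow> y \<in> carrier G \<Longrightarrow> \<gamma> y (inv x) = inv (\<gamma> y x)"
proof -
  assume a: "x \<in> carrier G" "y \<in> carrier G"
  have "\<gamma> y x \<otimes> \<gamma> y (inv x) = \<gamma> y (x \<otimes> inv x)" using a by (intro g2[symmetric]) auto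
  also have "\<dots> = \<gamma> y \<one>" using a by simp
  also have "\<dots> = \<one>" using a by (intro gk2) auto
  finally have "\<gamma> y x \<otimes> \<gamma> y (inv x) = \<one>" .
  then have "\<gamma> y (inv x) \<otimes> \<gamma> y x = \<one>" by (rule inv_comm) (use a in simp_all)
  then have "inv (\<gamma> y x) = \<gamma> y (inv x)" by (rule inv_equality) (use a in simp_all)
  then show ?thesis by (rule sym)
qed
lemma gcj1: "a \<in> carrier G \<Longrightarrow> x \<in> carrier G \<Longrightarrow> y \<in> carrier G \<Longrightarrow> \<gamma> (cj a x) y = \<gamma> x y"
proof -
  assume c: "a \<in> carrier G" "x \<in> carrier G" "y \<in> carrier G"
  have "\<gamma> (cj a x) y = \<gamma> a y \<otimes> \<gamma> x y \<otimes> inv (\<gamma> a y)"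
    unfolding cj_def using c by (simp add: g1 ginv1)
  also have "\<dots> = \<gamma> x y \<otimes> \<gamma> a y \<otimes> inv (\<gamma> a y)" using c kcomm[of "\<gamma> a y" "\<gamma> x y"] by simp
  also have "\<dots> = \<gamma> x y" using c by (simp add: m_assoc)
  finally show ?thesis .
qed
lemma gcj2: "a \<in> carrier G \<Longrightarrow> x \<in> carrier G \<Longrightarrow> y \<in> carrier G \<Longrightarrow> \<gamma> y (cj a x) = \<gamma> y x"
proof -
  assume c: "a \<in> carrier G" "x \<in> carrier G" "y \<in> carrier G"
  have "\<gamma> y (cj a x) = \<gamma> y a \<otimes> \<gamma> y x \<otimes> inv (\<gamma> y a)"
    unfolding cj_def using c by (simp add: g2 ginv2)
  also have "\<dots> = \<gamma> y x \<otimes> \<gamma> y a \<otimes> inv (\<gamma> y a)" using c kcomm[of "\<gamma> y a" "\<gamma> y x"] by simp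
  also have "\<dots> = \<gamma> y x" using c by (simp add: m_assoc)
  finally show ?thesis .
qed
lemma gmk1: "mk x x' \<Longrightarrow> y \<in> carrier G \<Longrightarrow> \<gamma> x y = \<gamma> x' y"
  unfolding mk_def by (auto simp: g1 gk1)
lemma gmk2: "mk x x' \<Longrightarrow> y \<in> carrier G \<Longrightarrow> \<gamma> y x = \<gamma> y x'"
  unfolding mk_def by (auto simp: g2 gk2)

definition op where "op g h = g \<otimes> f g \<otimes> h \<otimes> inv (f g) \<otimes> \<gamma> g h"

lemma op_cj: "g \<in> carrier G \<Longrightarrow> h \<in> carrier G \<Longrightarrow> op g h = g \<otimes> cj (f g) h \<otimes> \<gamma> g h"
  unfolding op_def cj_def by (simp add: m_assoc)
lemma op_c[simp]: "g \<in> carrier G \<Longrightarrow> h \<in> carrier G \<Longrightarrow> op g h \<in> carrier G"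
  unfolding op_def by simp

lemma lift_op: "x \<in> carrier G \<Longrightarrow> y \<in> carrier G \<Longrightarrow> mk (f (op x y)) (f x \<otimes> f y)"
proof -
  assume c: "x \<in> carrier G" "y \<in> carrier G"
  have "mk (f (op x y)) (f (x \<otimes> cj (f x) y))" unfolding op_cj[OF c] using c by (intro lift_K) auto
  moreover have "mk (f (x \<otimes> cj (f x) y)) (f x \<otimes> f (cj (f x) y))" using c by (intro lift_mult) auto
  moreover have "mk (f x \<otimes> f (cj (f x) y)) (f x \<otimes> f y)" using c by (intro mk_mult mk_refl lift_cj) auto
  ultimately show ?thesis by (metis mk_trans)
qed

lemma cj_op: "x \<in> carrier G \<Longrightarrow> y \<in> carrier G \<Longrightarrow> z \<in> carrier G \<Longrightarrow> cj (f (op x y)) z = cj (f x) (cj (f y) z)"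
  using lift_op cj_mk cj_cj by simp

lemma g_op1: "x \<in> carrier G \<Longrightarrow> y \<in> carrier G \<Longrightarrow> z \<in> carrier G \<Longrightarrow> \<gamma> (op x y) z = \<gamma> x z \<otimes> \<gamma> y z"
  using op_cj g1 gk1 gcj1 by simp
lemma g_op2: "x \<in> carrier G \<Longrightarrow> y \<in> carrier G \<Longrightarrow> z \<in> carrier G \<Longrightarrow> \<gamma> x (op y z) = \<gamma> x y \<otimes> \<gamma> x z"
  using op_cj g2 gk2 gcj2 by simp

lemma op_assoc: assumes c: "x \<in> carrier G" "y \<in> carrier G" "z \<in> carrier G"
  shows "op (op x y) z = op x (op y z)"
proof -
  have "op (op x y) z = op x y \<otimes> cj (f (op x y)) z \<otimes> \<gamma> (op x y) z"
    by (rule op_cj) (use c in simp_all)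
  also have "\<dots> = (x \<otimes> cj (f x) y \<otimes> \<gamma> x y) \<otimes> cj (f x) (cj (f y) z) \<otimes> (\<gamma> x z \<otimes> \<gamma> y z)"
    by (subst cj_op[OF c], subst g_op1[OF c], subst op_cj[OF c(1,2)], rule refl)
  also have "\<dots> = x \<otimes> (cj (f x) y \<otimes> cj (f x) (cj (f y) z) \<otimes> \<gamma> y z) \<otimes> (\<gamma> x y \<otimes> \<gamma> x z)"
    using c by (intro sh1) auto
  also have "\<dots> = x \<otimes> cj (f x) (y \<otimes> cj (f y) z \<otimes> \<gamma> y z) \<otimes> (\<gamma> x y \<otimes> \<gamma> x z)"
    using c by (simp add: cj_mult cj_K)
  also have "\<dots> = x \<otimes> cj (f x) (op y z) \<otimes> \<gamma> x (op y z)"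
    by (subst g_op2[OF c], subst op_cj[OF c(2,3)], rule refl)
  also have "\<dots> = op x (op y z)"
    by (rule op_cj[symmetric]) (use c in simp_all)
  finally show ?thesis .
qed


lemma op_one_l: "y \<in> carrier G \<Longrightarrow> op \<one> y = y"
proof -
  assume y: "y \<in> carrier G"
  have "cj (f \<one>) y = cj \<one> y" using lift_one y by (rule cj_mk)
  then show ?thesis using y by (simp add: op_cj cj_one gk1)
qed
lemma op_one_r: "x \<in> carrier G \<Longrightarrow> op x \<one> = x"
  by (simp add: op_cj cj_def gk2)

definition iot where "iot x = inv (f x) \<otimes> inv x \<otimes> f x \<otimes> \<gamma> x x"
lemma iot_cj: "x \<in> carrier G \<Longrightarrow> iot x = cj (inv (f x)) (inv x) \<otimes> \<gamma> x x"
  unfolding iot_def cj_def by simp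
lemma iot_c[simp]: "x \<in> carrier G \<Longrightarrow> iot x \<in> carrier G"
  unfolding iot_def by simp
lemma lift_iot: "x \<in> carrier G \<Longrightarrow> mk (f (iot x)) (inv (f x))"
proof -
  assume x: "x \<in> carrier G"
  have "mk (f (iot x)) (f (cj (inv (f x)) (inv x)))" unfolding iot_cj[OF x] using x by (intro lift_K) auto
  moreover have "mk (f (cj (inv (f x)) (inv x))) (f (inv x))" using x by (intro lift_cj) auto
  moreover have "mk (f (inv x)) (inv (f x))" using x by (intro lift_inv)
  ultimately show ?thesis by (metis mk_trans)
qed

lemma op_iot: assumes x: "x \<in> carrier G" shows "op (iot x) x = \<one>"
proof -
  have "op (iot x) x = iot x \<otimes> cj (f (iot x)) x \<otimes> \<gamma> (iot x) x"
    by (rule op_cj) (use x in simp_all)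
  also have "cj (f (iot x)) x = cj (inv (f x)) x" using lift_iot[OF x] x by (rule cj_mk)
  also have "\<gamma> (iot x) x = \<gamma> (cj (inv (f x)) (inv x)) x"
    unfolding iot_cj[OF x] using x by (intro gmk1 mk_K) auto
  also have "\<dots> = inv (\<gamma> x x)" using x by (simp add: gcj1 ginv1)
  also have "iot x = cj (inv (f x)) (inv x) \<otimes> \<gamma> x x" using x by (rule iot_cj)
  also have "cj (inv (f x)) (inv x) \<otimes> \<gamma> x x \<otimes> cj (inv (f x)) x = cj (inv (f x)) (inv x) \<otimes> cj (inv (f x)) x \<otimes> \<gamma> x x"
    using x by (intro mid) auto
  also have "cj (inv (f x)) (inv x) \<otimes> cj (inv (f x)) x = cj (inv (f x)) (inv x \<otimes> x)"
    by (rule cj_mult[symmetric]) (use x in simp_all)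
  also have "\<dots> = \<one>" using x by (simp add: cj_def)
  finally show ?thesis using iot_cj[OF x] x by (simp add: m_assoc)
qed

definition S where "S = \<lparr>carrier = carrier G, monoid.mult = op, one = \<one>\<rparr>"

lemma S_group: "group S"
proof (rule groupI)
  show "\<And>x y. x \<in> carrier S \<Longrightarrow> y \<in> carrier S \<Longrightarrow> x \<otimes>\<^bsub>S\<^esub> y \<in> carrier S" by (simp add: S_def)
  show "\<one>\<^bsub>S\<^esub> \<in> carrier S" by (simp add: S_def)
  show "\<And>x y z. x \<in> carrier S \<Longrightarrow> y \<in> carrier S \<Longrightarrow> z \<in> carrier S \<Longrightarrow>
     x \<otimes>\<^bsub>S\<^esub> y \<otimes>\<^bsub>S\<^esub> z = x \<otimes>\<^bsub>S\<^esub> (y \<otimes>\<^bsub>S\<^esub> z)" by (simp add: S_def op_assoc)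
  show "\<And>x. x \<in> carrier S \<Longrightarrow> \<one>\<^bsub>S\<^esub> \<otimes>\<^bsub>S\<^esub> x = x" by (simp add: S_def op_one_l)
  show "\<And>x. x \<in> carrier S \<Longrightarrow> \<exists>y\<in>carrier S. y \<otimes>\<^bsub>S\<^esub> x = \<one>\<^bsub>S\<^esub>"
    by (auto simp: S_def intro!: bexI[of _ "iot _"] op_iot)
qed

lemma S_inv: "x \<in> carrier G \<Longrightarrow> inv\<^bsub>S\<^esub> x = iot x"
proof -
  assume x: "x \<in> carrier G"
  interpret Sg: group S by (rule S_group)
  show ?thesis by (rule Sg.inv_equality) (use x in \<open>simp_all add: S_def op_iot\<close>)
qed

end

context bbs begin
lemma sh2: assumes "P \<in> carrier G" "Xx \<in> carrier G" "V \<in> carrier G" "k1 \<in> K" "k2 \<in> K" "k3 \<in> K"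
  and "P \<otimes> Xx = \<one>"
  shows "P \<otimes> k1 \<otimes> (Xx \<otimes> V \<otimes> k2) \<otimes> inv (k1 \<otimes> k3) = V \<otimes> (k2 \<otimes> inv k3)"
proof -
  have "P \<otimes> k1 \<otimes> (Xx \<otimes> V \<otimes> k2) = P \<otimes> (Xx \<otimes> V \<otimes> k2) \<otimes> k1"
    using assms by (intro mid) auto
  also have "P \<otimes> (Xx \<otimes> V \<otimes> k2) = (P \<otimes> Xx) \<otimes> (V \<otimes> k2)" using assms(1-6) by (simp add: m_assoc)
  also have "\<dots> = V \<otimes> k2" using assms by simp
  finally have "P \<otimes> k1 \<otimes> (Xx \<otimes> V \<otimes> k2) \<otimes> inv (k1 \<otimes> k3) = V \<otimes> (k2 \<otimes> (k1 \<otimes> (inv k3 \<otimes> inv k1)))"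
    using assms by (simp add: m_assoc inv_mult_group)
  also have "k1 \<otimes> (inv k3 \<otimes> inv k1) = inv k3 \<otimes> (k1 \<otimes> inv k1)"
    using assms by (intro klcomm) auto
  also have "\<dots> = inv k3" using assms by simp
  finally show ?thesis .
qed

lemma sh3: assumes "x \<in> carrier G" "P \<in> carrier G" "D \<in> carrier G" "k1 \<in> K" "k2 \<in> K" "k3 \<in> K" "k4 \<in> K"
  shows "x \<otimes> (P \<otimes> D \<otimes> k1) \<otimes> (k2 \<otimes> k3) = x \<otimes> P \<otimes> k2 \<otimes> (D \<otimes> (k3 \<otimes> inv k4)) \<otimes> (k4 \<otimes> k1)"
proof -
  have "x \<otimes> P \<otimes> k2 \<otimes> (D \<otimes> (k3 \<otimes> inv k4)) = x \<otimes> P \<otimes> (D \<otimes> (k3 \<otimes> inv k4)) \<otimes> k2"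
    using assms by (intro mid) auto
  then have "x \<otimes> P \<otimes> k2 \<otimes> (D \<otimes> (k3 \<otimes> inv k4)) \<otimes> (k4 \<otimes> k1) = x \<otimes> (P \<otimes> (D \<otimes> (k3 \<otimes> (inv k4 \<otimes> (k2 \<otimes> (k4 \<otimes> k1))))))"
    using assms by (simp add: m_assoc)
  also have "inv k4 \<otimes> (k2 \<otimes> (k4 \<otimes> k1)) = k2 \<otimes> (inv k4 \<otimes> (k4 \<otimes> k1))"
    using assms by (intro klcomm) auto
  also have "\<dots> = k2 \<otimes> k1" using assms by simp
  also have "k3 \<otimes> (k2 \<otimes> k1) = k1 \<otimes> (k2 \<otimes> k3)" using assms by (simp add: kcomm klcomm)
  finally show ?thesis using assms by (simp add: m_assoc)
qed
end

locale two = L1?: lif G K A \<chi>1 f1 \<gamma>1 + L2: lif G K A \<chi>2 f2 \<gamma>2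
  for G :: "('a,'b) monoid_scheme" (structure) and K A \<chi>1 f1 \<gamma>1 \<chi>2 f2 \<gamma>2
begin

lemma g2_op1: "x \<in> carrier G \<Longrightarrow> y \<in> carrier G \<Longrightarrow> z \<in> carrier G \<Longrightarrow> \<gamma>2 x (L1.op y z) = \<gamma>2 x y \<otimes> \<gamma>2 x z"
  using L1.op_cj L2.g2 L2.gk2 L2.gcj2 by simp
lemma g1_op2: "x \<in> carrier G \<Longrightarrow> y \<in> carrier G \<Longrightarrow> z \<in> carrier G \<Longrightarrow> \<gamma>1 (L2.op x y) z = \<gamma>1 x z \<otimes> \<gamma>1 y z"
  using L2.op_cj L1.g1 L1.gk1 L1.gcj1 by simp
lemma g1_op2r: "x \<in> carrier G \<Longrightarrow> y \<in> carrier G \<Longrightarrow> z \<in> carrier G \<Longrightarrow> \<gamma>1 x (L2.op y z) = \<gamma>1 x y \<otimes> \<gamma>1 x z"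
  using L2.op_cj L1.g2 L1.gk2 L1.gcj2 by simp
lemma lift1_op2: "x \<in> carrier G \<Longrightarrow> y \<in> carrier G \<Longrightarrow> mk (f1 (L2.op x y)) (f1 x \<otimes> f1 y)"
proof -
  assume c: "x \<in> carrier G" "y \<in> carrier G"
  have "mk (f1 (L2.op x y)) (f1 (x \<otimes> cj (f2 x) y))" unfolding L2.op_cj[OF c] using c by (intro L1.lift_K) auto
  moreover have "mk (f1 (x \<otimes> cj (f2 x) y)) (f1 x \<otimes> f1 (cj (f2 x) y))" using c by (intro L1.lift_mult) auto
  moreover have "mk (f1 x \<otimes> f1 (cj (f2 x) y)) (f1 x \<otimes> f1 y)" using c by (intro mk_mult mk_refl L1.lift_cj) auto
  ultimately show ?thesis by (metis mk_trans)
qed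

lemma sb: assumes c: "x \<in> carrier G" "y \<in> carrier G" "z \<in> carrier G"
  shows "L2.op x (L1.op y z) = L1.op (L2.op x y) (L1.op (L1.iot x) (L2.op x z))"
proof -
  define a b e where "a = f1 x" and "b = f2 x" and "e = f1 y"
  have abe: "a \<in> A" "b \<in> A" "e \<in> A" "a \<in> carrier G" "b \<in> carrier G" "e \<in> carrier G"
    using c unfolding a_def b_def e_def by auto
  define V where "V = cj (inv a) (cj b z)"
  define \<kappa> where "\<kappa> = \<gamma>2 x z \<otimes> inv (\<gamma>1 x z)"
  have Vc: "V \<in> carrier G" and \<kappa>K: "\<kappa> \<in> K" using c abe unfolding V_def \<kappa>_def by auto
  have LHS: "L2.op x (L1.op y z) = x \<otimes> (cj b y \<otimes> cj b (cj e z) \<otimes> \<gamma>1 y z) \<otimes> (\<gamma>2 x y \<otimes> \<gamma>2 x z)"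
  proof -
    have "L2.op x (L1.op y z) = x \<otimes> cj b (L1.op y z) \<otimes> \<gamma>2 x (L1.op y z)"
      unfolding b_def by (rule L2.op_cj) (use c in simp_all)
    also have "\<dots> = x \<otimes> cj b (y \<otimes> cj e z \<otimes> \<gamma>1 y z) \<otimes> (\<gamma>2 x y \<otimes> \<gamma>2 x z)"
      unfolding e_def by (subst g2_op1[OF c], subst L1.op_cj[OF c(2,3)], rule refl)
    also have "\<dots> = x \<otimes> (cj b y \<otimes> cj b (cj e z) \<otimes> \<gamma>1 y z) \<otimes> (\<gamma>2 x y \<otimes> \<gamma>2 x z)"
      using c abe by (simp add: cj_mult cj_K)
    finally show ?thesis .
  qed
  have v: "L1.op (L1.iot x) (L2.op x z) = V \<otimes> \<kappa>"
  proof -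
    let ?w = "L2.op x z"
    have wc: "?w \<in> carrier G" using c by simp
    have "L1.op (L1.iot x) ?w = L1.iot x \<otimes> cj (f1 (L1.iot x)) ?w \<otimes> \<gamma>1 (L1.iot x) ?w"
      by (rule L1.op_cj) (use c in simp_all)
    also have "cj (f1 (L1.iot x)) ?w = cj (inv a) ?w" unfolding a_def using L1.lift_iot[OF c(1)] wc by (rule cj_mk)
    also have "\<gamma>1 (L1.iot x) ?w = \<gamma>1 (cj (inv a) (inv x)) ?w"
      unfolding L1.iot_cj[OF c(1)] a_def using c wc by (intro L1.gmk1 mk_K) auto
    also have "\<dots> = inv (\<gamma>1 x ?w)" using c wc abe by (simp add: L1.gcj1 L1.ginv1)
    also have "\<gamma>1 x ?w = \<gamma>1 x x \<otimes> \<gamma>1 x z" by (rule g1_op2r[OF c(1) c(1) c(3)])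
    also have "L1.iot x = cj (inv a) (inv x) \<otimes> \<gamma>1 x x" unfolding a_def by (rule L1.iot_cj[OF c(1)])
    also have "cj (inv a) ?w = cj (inv a) x \<otimes> V \<otimes> \<gamma>2 x z"
      unfolding V_def b_def using c abe by (simp add: L2.op_cj cj_mult cj_K)
    also have "cj (inv a) (inv x) \<otimes> \<gamma>1 x x \<otimes> (cj (inv a) x \<otimes> V \<otimes> \<gamma>2 x z) \<otimes> inv (\<gamma>1 x x \<otimes> \<gamma>1 x z) = V \<otimes> \<kappa>"
      unfolding \<kappa>_def
    proof (rule sh2)
      have "cj (inv a) (inv x) \<otimes> cj (inv a) x = cj (inv a) (inv x \<otimes> x)"
        by (rule cj_mult[symmetric]) (use c abe in simp_all)
      then show "cj (inv a) (inv x) \<otimes> cj (inv a) x = \<one>" using c abe by (simp add: cj_def)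
    qed (use c abe Vc in simp_all)
    finally show ?thesis unfolding L1.iot_cj[OF c(1)] a_def[symmetric] .
  qed
  have u: "cj (f1 (L2.op x y)) V = cj b (cj e z)"
  proof -
    have "cj (f1 (L2.op x y)) V = cj (a \<otimes> e) V" unfolding a_def e_def using lift1_op2[OF c(1,2)] Vc by (rule cj_mk)
    also have "\<dots> = cj (a \<otimes> e \<otimes> inv a \<otimes> b) z" unfolding V_def using abe c by (simp add: cj_cj m_assoc)
    also have "\<dots> = cj (b \<otimes> e) z"
    proof (rule cj_mk[OF _ c(3)])
      have "mk (a \<otimes> e \<otimes> inv a) (e \<otimes> a \<otimes> inv a)" using abe by (intro mk_mult Acomm mk_refl) auto
      then have "mk (a \<otimes> e \<otimes> inv a) e" using abe by (simp add: m_assoc)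
      then have "mk (a \<otimes> e \<otimes> inv a \<otimes> b) (e \<otimes> b)" using abe by (intro mk_mult mk_refl) auto
      moreover have "mk (e \<otimes> b) (b \<otimes> e)" using abe by (intro Acomm)
      ultimately show "mk (a \<otimes> e \<otimes> inv a \<otimes> b) (b \<otimes> e)" by (rule mk_trans)
    qed
    also have "\<dots> = cj b (cj e z)" using abe c by (simp add: cj_cj)
    finally show ?thesis .
  qed
  have g: "\<gamma>1 (L2.op x y) (V \<otimes> \<kappa>) = \<gamma>1 x z \<otimes> \<gamma>1 y z"
  proof -
    have "\<gamma>1 (L2.op x y) (V \<otimes> \<kappa>) = \<gamma>1 (L2.op x y) V" using c Vc \<kappa>K by (intro L1.gmk2 mk_K) auto
    also have "\<dots> = \<gamma>1 x V \<otimes> \<gamma>1 y V" by (rule g1_op2[OF c(1,2) Vc])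
    also have "\<dots> = \<gamma>1 x z \<otimes> \<gamma>1 y z" unfolding V_def using c abe by (simp add: L1.gcj2)
    finally show ?thesis .
  qed
  have "L1.op (L2.op x y) (V \<otimes> \<kappa>) = L2.op x y \<otimes> cj (f1 (L2.op x y)) (V \<otimes> \<kappa>) \<otimes> \<gamma>1 (L2.op x y) (V \<otimes> \<kappa>)"
    by (rule L1.op_cj) (use c Vc \<kappa>K in simp_all)
  also have "cj (f1 (L2.op x y)) (V \<otimes> \<kappa>) = cj b (cj e z) \<otimes> \<kappa>"
    using c Vc \<kappa>K u by (simp add: cj_mult cj_K)
  also note g
  also have uu: "L2.op x y = x \<otimes> cj b y \<otimes> \<gamma>2 x y" unfolding b_def by (rule L2.op_cj[OF c(1,2)])
  also have "x \<otimes> cj b y \<otimes> \<gamma>2 x y \<otimes> (cj b (cj e z) \<otimes> \<kappa>) \<otimes> (\<gamma>1 x z \<otimes> \<gamma>1 y z) = L2.op x (L1.op y z)"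
    unfolding LHS \<kappa>_def by (rule sh3[symmetric]) (use c abe in simp_all)
  finally have F: "L1.op (x \<otimes> cj b y \<otimes> \<gamma>2 x y) (V \<otimes> \<kappa>) = L2.op x (L1.op y z)" .
  show ?thesis unfolding v uu using F by (rule sym)
qed


lemma skew: "skew_brace L1.S L2.S"
  unfolding skew_brace_def
proof (intro conjI L1.S_group L2.S_group ballI)
  show "carrier L2.S = carrier L1.S" by (simp add: L1.S_def L2.S_def)
  fix g h k assume "g \<in> carrier L1.S" "h \<in> carrier L1.S" "k \<in> carrier L1.S"
  then have c: "g \<in> carrier G" "h \<in> carrier G" "k \<in> carrier G" by (simp_all add: L1.S_def)
  have "L1.op (L1.op (L2.op g h) (L1.iot g)) (L2.op g k) = L1.op (L2.op g h) (L1.op (L1.iot g) (L2.op g k))"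
    using c by (simp add: L1.op_assoc)
  then show "g \<otimes>\<^bsub>L2.S\<^esub> (h \<otimes>\<^bsub>L1.S\<^esub> k) =
    g \<otimes>\<^bsub>L2.S\<^esub> h \<otimes>\<^bsub>L1.S\<^esub> inv\<^bsub>L1.S\<^esub> g \<otimes>\<^bsub>L1.S\<^esub> (g \<otimes>\<^bsub>L2.S\<^esub> k)"
    using c sb[OF c] by (simp add: L1.S_inv) (simp add: L1.S_def L2.S_def)
qed

end

context bbs begin
lemma lif_ok: "\<chi> \<in> endA G K A \<Longrightarrow> \<gamma> \<in> bilinB G K \<Longrightarrow> lif G K A \<chi> (lifting G K A \<chi>) \<gamma>"
  unfolding lif_def lif_axioms_def using lift_ex bbs_axioms by blast

lemma iot_indep: assumes "is_lifting G K A \<chi> f1" "is_lifting G K A \<chi> f2" "g \<in> carrier G"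
  shows "inv (f1 g) \<otimes> inv g \<otimes> f1 g = inv (f2 g) \<otimes> inv g \<otimes> f2 g"
proof -
  have c: "f1 g \<in> carrier G" "f2 g \<in> carrier G" using assms unfolding is_lifting_def by auto
  have "K #> f1 g = K #> f2 g" using assms unfolding is_lifting_def by auto
  then have "mk (f1 g) (f2 g)" using c by (rule mk_coset[rotated 2])
  then have "mk (inv (f1 g)) (inv (f2 g))" by (rule mk_inv)
  then have "cj (inv (f1 g)) (inv g) = cj (inv (f2 g)) (inv g)" using assms(3) by (intro cj_mk) auto
  then show ?thesis using c unfolding cj_def by simp
qed
end

lemma (in bbs) circ_eq: assumes "\<chi> \<in> endA G K A" "\<gamma> \<in> bilinB G K"
  shows "circ_struct G K A \<chi> \<gamma> = lif.S G (lifting G K A \<chi>) \<gamma>"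
  unfolding circ_struct_def lif.S_def[OF lif_ok[OF assms]] circ_op_def lif.op_def[OF lif_ok[OF assms]]
  by (simp add: fun_eq_iff)

lemma (in bbs) circ_group: "\<chi> \<in> endA G K A \<Longrightarrow> \<gamma> \<in> bilinB G K \<Longrightarrow> group (circ_struct G K A \<chi> \<gamma>)"
  using circ_eq lif.S_group lif_ok by metis

lemma (in bbs) circ_skew: "\<chi>1 \<in> endA G K A \<Longrightarrow> \<gamma>1 \<in> bilinB G K \<Longrightarrow> \<chi>2 \<in> endA G K A \<Longrightarrow> \<gamma>2 \<in> bilinB G K
  \<Longrightarrow> skew_brace (circ_struct G K A \<chi>1 \<gamma>1) (circ_struct G K A \<chi>2 \<gamma>2)"
proof -
  assume a: "\<chi>1 \<in> endA G K A" "\<gamma>1 \<in> bilinB G K" "\<chi>2 \<in> endA G K A" "\<gamma>2 \<in> bilinB G K"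
  have "two G K A \<chi>1 (lifting G K A \<chi>1) \<gamma>1 \<chi>2 (lifting G K A \<chi>2) \<gamma>2"
    unfolding two_def using a lif_ok by blast
  then show ?thesis using a by (simp add: circ_eq two.skew)
qed

lemma (in bbs) circ_inv: assumes "\<chi> \<in> endA G K A" "\<gamma> \<in> bilinB G K" "is_lifting G K A \<chi> f" "g \<in> carrier G"
  shows "inv\<^bsub>circ_struct G K A \<chi> \<gamma>\<^esub> g = inv (f g) \<otimes> inv g \<otimes> f g \<otimes> \<gamma> g g"
proof -
  interpret L: lif G K A \<chi> "lifting G K A \<chi>" \<gamma> by (rule lif_ok[OF assms(1,2)])
  have "inv\<^bsub>circ_struct G K A \<chi> \<gamma>\<^esub> g = L.iot g" unfolding circ_eq[OF assms(1,2)] using assms(4) by (rule L.S_inv)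
  also have "\<dots> = inv (f g) \<otimes> inv g \<otimes> f g \<otimes> \<gamma> g g"
    unfolding L.iot_def using iot_indep[OF L.fl assms(3,4)] by simp
  finally show ?thesis .
qed

theorem mainTheorem1:
  fixes G :: "('a, 'b) monoid_scheme" and K A :: "'a set"
    and \<phi> \<psi> :: "'a set \<Rightarrow> 'a set" and \<beta> \<alpha> :: "'a \<Rightarrow> 'a \<Rightarrow> 'a"
  assumes "group G"
    and "central_subgroup G K"
    and "subgroup A G" and "K \<subseteq> A"
    and "comm_group (G\<lparr>carrier := A\<rparr> Mod K)"
    and "\<phi> \<in> endA G K A" and "\<beta> \<in> bilinB G K"
    and "\<psi> \<in> endA G K A" and "\<alpha> \<in> bilinB G K"
  shows "group (circ_struct G K A \<phi> \<beta>) \<and> group (circ_struct G K A \<psi> \<alpha>)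
    \<and> one (circ_struct G K A \<phi> \<beta>) = \<one>\<^bsub>G\<^esub>
    \<and> (\<forall>f. is_lifting G K A \<phi> f \<longrightarrow> (\<forall>g\<in>carrier G.
          inv\<^bsub>circ_struct G K A \<phi> \<beta>\<^esub> g =
          inv\<^bsub>G\<^esub> (f g) \<otimes>\<^bsub>G\<^esub> inv\<^bsub>G\<^esub> g \<otimes>\<^bsub>G\<^esub> f g \<otimes>\<^bsub>G\<^esub> \<beta> g g))
    \<and> bi_skew_brace (circ_struct G K A \<phi> \<beta>) (circ_struct G K A \<psi> \<alpha>)
    \<and> brace_block (carrier G) {circ_struct G K A \<chi> \<gamma> | \<chi> \<gamma>. \<chi> \<in> endA G K A \<and> \<gamma> \<in> bilinB G K}"
proof -
  interpret bbs G K A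
    using assms(1-5) by (simp add: bbs_def bbs_axioms_def)
  show ?thesis
  proof (intro conjI allI impI ballI)
    show "group (circ_struct G K A \<phi> \<beta>)" using assms by (intro circ_group)
    show "group (circ_struct G K A \<psi> \<alpha>)" using assms by (intro circ_group)
    show "\<one>\<^bsub>circ_struct G K A \<phi> \<beta>\<^esub> = \<one>\<^bsub>G\<^esub>" by (simp add: circ_struct_def)
    show "inv\<^bsub>circ_struct G K A \<phi> \<beta>\<^esub> g = inv\<^bsub>G\<^esub> (f g) \<otimes>\<^bsub>G\<^esub> inv\<^bsub>G\<^esub> g \<otimes>\<^bsub>G\<^esub> f g \<otimes>\<^bsub>G\<^esub> \<beta> g g"
      if "is_lifting G K A \<phi> f" "g \<in> carrier G" for f g
      using assms(6,7) that by (rule circ_inv)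
    show "bi_skew_brace (circ_struct G K A \<phi> \<beta>) (circ_struct G K A \<psi> \<alpha>)"
      unfolding bi_skew_brace_def using assms by (intro conjI circ_skew)
    show "brace_block (carrier G) {circ_struct G K A \<chi> \<gamma> | \<chi> \<gamma>. \<chi> \<in> endA G K A \<and> \<gamma> \<in> bilinB G K}"
    proof -
      have cc: "carrier (circ_struct G K A \<chi> \<gamma>) = carrier G" for \<chi> \<gamma> by (simp add: circ_struct_def)
      show ?thesis unfolding brace_block_def bi_skew_brace_def
        using circ_skew circ_group by (auto simp: cc)
    qed
  qed
qed

end
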